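(* Let $\Phi=\exp(\phi)\in KV_3$ satisfy the pentagon equation $\Phi^{12,3,4}\Phi^{1,2,34}=\Phi^{1,2,3}\Phi^{1,23,4}\Phi^{2,3,4}$, the inversion property $\Phi^{1,2,3}\Phi^{3,2,1}=e$, and the hexagon equations $\exp((t^{1,3}+t^{2,3})/2)=\Phi^{2,1,3}\exp(t^{1,3}/2)(\Phi^{2,3,1})^{-1}\exp(t^{2,3}/2)\Phi^{3,2,1}$ and $\exp((t^{1,2}+t^{1,3})/2)=(\Phi^{1,3,2})^{-1}\exp(t^{1,3}/2)\Phi^{3,1,2}\exp(t^{1,2}/2)(\Phi^{3,2,1})^{-1}$. Then $\pi(\phi_2)=1/8$.
   Context: $k$ is a field of characteristic zero; $\mathfrak{lie}_n$, $\mathrm{Ass}_n$ are the degree completions of the free Lie and free associative algebras over $k$ on $x_1,\dots,x_n$ (written $x,y,z$; $x,y,z,w$), graded by word length. $a=a_0+\sum_k(\partial_ka)x_k$; $\mathfrak{tr}_n=\mathrm{Ass}_n^+/\langle ab-ba\rangle$ with projection $\mathrm{Tr}$. $\mathfrak{tder}_n$: derivations with $u(x_i)=[x_i,a_i]$, written $(a_1,\dots,a_n)$ ($a_i$ with zero coefficient of $x_i$ in degree one); $\mathfrak{sder}_n$: those with $u(\sum x_i)=0$; $\mathrm{div}(u)=\sum_k\mathrm{Tr}(x_k\partial_ka_k)$; $\mathfrak{kv}_n=\{u\in\mathfrak{sder}_n:\mathrm{div}\,u=0\}$; $KV_n=\exp(\mathfrak{kv}_n)$, $e$ the identity. In $\mathfrak{tder}_3$: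 $t^{1,2}=(y,x,0)$, $t^{1,3}=(z,0,x)$, $t^{2,3}=(0,z,y)$. For $u=(a_1,a_2,a_3)\in\mathfrak{tder}_3$ and a permutation $(i_1,i_2,i_3)$ of $(1,2,3)$, $u^{i_1,i_2,i_3}$ sends $x_{i_k}\mapsto[x_{i_k},a_k(x_{i_1},x_{i_2},x_{i_3})]$ ($x_1=x,x_2=y,x_3=z$). In $\mathfrak{tder}_4$: $u^{1,2,3}=(a_1,a_2,a_3,0)$, $u^{2,3,4}=(0,a_1,a_2,a_3)(y,z,w)$, $u^{12,3,4}=(a_1,a_1,a_2,a_3)(x+y,z,w)$, $u^{1,23,4}=(a_1,a_2,a_2,a_3)(x,y+z,w)$, $u^{1,2,34}=(a_1,a_2,a_3,a_3)(x,y,z+w)$. For group elements $\exp(u)^{\dots}=\exp(u^{\dots})$. For $\Phi=\exp(\phi)$ satisfying the pentagon equation, the degree-two component $\phi_2$ of $\phi$ has the form $(\alpha[y,z],\beta[z,x],\gamma[x,y])$ with $\alpha,\beta,\gamma\in k$, and $\pi(\phi_2):=\alpha+\beta+\gamma$. *)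

theory Defs
  imports Main
begin

text \<open>Completed free associative algebra over a field 'k (char 0) on letters
  x_0, x_1, x_2, ... (paper's x_1=x, x_2=y, x_3=z, x_4=w are letters 0,1,2,3 here):
  a series is the function assigning to each word its coefficient.\<close>

type_synonym 'k ser = "nat list \<Rightarrow> 'k"

definition zser :: "'k::field_char_0 ser" where
  "zser = (\<lambda>w. 0)"

definition X :: "nat \<Rightarrow> 'k::field_char_0 ser" where
  "X i = (\<lambda>w. if w = [i] then 1 else 0)"

definition smult :: "'k::field_char_0 ser \<Rightarrow> 'k ser \<Rightarrow> 'k ser" where
  "smult f g = (\<lambda>w. \<Sum>j\<le>length w. f (take j w) * g (drop j w))"

definition sbr :: "'k::field_char_0 ser \<Rightarrow> 'k ser \<Rightarrow> 'k ser" where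
  "sbr f g = (\<lambda>w. smult f g w - smult g f w)"

inductive_set lie_poly :: "nat \<Rightarrow> 'k::field_char_0 ser set" for n :: nat where
  lp_zero: "zser \<in> lie_poly n"
| lp_gen: "i < n \<Longrightarrow> X i \<in> lie_poly n"
| lp_add: "f \<in> lie_poly n \<Longrightarrow> g \<in> lie_poly n \<Longrightarrow> (\<lambda>w. f w + g w) \<in> lie_poly n"
| lp_scale: "f \<in> lie_poly n \<Longrightarrow> (\<lambda>w. c * f w) \<in> lie_poly n"
| lp_br: "f \<in> lie_poly n \<Longrightarrow> g \<in> lie_poly n \<Longrightarrow> sbr f g \<in> lie_poly n"

definition hom :: "nat \<Rightarrow> 'k::field_char_0 ser \<Rightarrow> 'k ser" where
  "hom d f = (\<lambda>w. if length w = d then f w else 0)"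

text \<open>Elements of the degree completion lie_n: every homogeneous component is a Lie polynomial.\<close>
definition lie_ser :: "nat \<Rightarrow> 'k::field_char_0 ser \<Rightarrow> bool" where
  "lie_ser n f \<longleftrightarrow> (\<forall>d. hom d f \<in> lie_poly n)"

text \<open>Tangential derivations: a tuple (a_0,...,a_{n-1}) encoded as a function nat => series.\<close>
definition tder :: "nat \<Rightarrow> (nat \<Rightarrow> 'k::field_char_0 ser) \<Rightarrow> bool" where
  "tder n a \<longleftrightarrow> (\<forall>i<n. lie_ser n (a i) \<and> a i [i] = 0) \<and> (\<forall>i\<ge>n. a i = zser)"

text \<open>The (continuous) derivation with x_i |-> [x_i, a_i], acting on series:
  coefficient of v in u(f) is the sum over factorisations v = p m s (m nonempty).\<close>
definition der :: "(nat \<Rightarrow> 'k::field_char_0 ser) \<Rightarrow> 'k ser \<Rightarrow> 'k ser" where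
  "der a f = (\<lambda>v. \<Sum>i\<le>length v. \<Sum>j\<le>length v.
      if i < j then
        (let p = take i v; m = drop i (take j v); s = drop j v in
          f (p @ [hd m] @ s) * a (hd m) (tl m) - f (p @ [last m] @ s) * a (last m) (butlast m))
      else 0)"

text \<open>exp(u) acting as an automorphism (u raises degree, so the sum is finite in each degree).
  Group elements are these automorphisms; the group product is composition.\<close>
definition texp :: "(nat \<Rightarrow> 'k::field_char_0 ser) \<Rightarrow> 'k ser \<Rightarrow> 'k ser" where
  "texp a = (\<lambda>f v. \<Sum>k\<le>length v. (der a ^^ k) f v / fact k)"

definition sder :: "nat \<Rightarrow> (nat \<Rightarrow> 'k::field_char_0 ser) \<Rightarrow> bool" where
  "sder n a \<longleftrightarrow> tder n a \<and> der a (\<lambda>w. \<Sum>i<n. X i w) = zser"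

text \<open>Tr: projection to cyclic words; represented as the function giving, for each word,
  the sum of coefficients over its rotation class.\<close>
definition cyc :: "nat list \<Rightarrow> nat list set" where
  "cyc w = {rotate j w | j. j < length w}"

definition Tr :: "'k::field_char_0 ser \<Rightarrow> nat list \<Rightarrow> 'k" where
  "Tr f = (\<lambda>w. \<Sum>w'\<in>cyc w. f w')"

text \<open>div(u) = sum_k Tr(x_k d_k a_k), with a = a_0 + sum_k (d_k a) x_k, i.e. (d_k a)(w) = a(w @ [k]).\<close>
definition tdiv :: "nat \<Rightarrow> (nat \<Rightarrow> 'k::field_char_0 ser) \<Rightarrow> nat list \<Rightarrow> 'k" where
  "tdiv n a = Tr (\<lambda>w. \<Sum>k<n. (case w of [] \<Rightarrow> 0 | l # w' \<Rightarrow> if l = k then a k (w' @ [k]) else 0))"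

definition kv :: "nat \<Rightarrow> (nat \<Rightarrow> 'k::field_char_0 ser) \<Rightarrow> bool" where
  "kv n a \<longleftrightarrow> sder n a \<and> tdiv n a = (\<lambda>w. 0)"

text \<open>Linear substitution x_i |-> sum of x_j over j with c j = Some i.\<close>
definition relabel :: "(nat \<Rightarrow> nat option) \<Rightarrow> 'k::field_char_0 ser \<Rightarrow> 'k ser" where
  "relabel c f = (\<lambda>v. if (\<forall>l\<in>set v. c l \<noteq> None) then f (map (the \<circ> c) v) else 0)"

definition cabl :: "(nat \<Rightarrow> nat option) \<Rightarrow> (nat \<Rightarrow> 'k::field_char_0 ser) \<Rightarrow> nat \<Rightarrow> 'k ser" where
  "cabl c a = (\<lambda>j. case c j of None \<Rightarrow> zser | Some k \<Rightarrow> relabel c (a k))"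

text \<open>u^{i1,i2,i3} (0-based indices).\<close>
definition perm3 :: "nat \<Rightarrow> nat \<Rightarrow> nat \<Rightarrow> (nat \<Rightarrow> 'k::field_char_0 ser) \<Rightarrow> nat \<Rightarrow> 'k ser" where
  "perm3 i1 i2 i3 = cabl (\<lambda>l. if l = i1 then Some 0 else if l = i2 then Some 1
                              else if l = i3 then Some 2 else None)"

definition c_1_2_3 :: "nat \<Rightarrow> nat option" where
  "c_1_2_3 l = (if l < 3 then Some l else None)"
definition c_2_3_4 :: "nat \<Rightarrow> nat option" where
  "c_2_3_4 l = (if 1 \<le> l \<and> l < 4 then Some (l - 1) else None)"
definition c_12_3_4 :: "nat \<Rightarrow> nat option" where
  "c_12_3_4 l = (if l = 0 \<or> l = 1 then Some 0 else if l = 2 then Some 1 else if l = 3 then Some 2 else None)"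
definition c_1_23_4 :: "nat \<Rightarrow> nat option" where
  "c_1_23_4 l = (if l = 0 then Some 0 else if l = 1 \<or> l = 2 then Some 1 else if l = 3 then Some 2 else None)"
definition c_1_2_34 :: "nat \<Rightarrow> nat option" where
  "c_1_2_34 l = (if l = 0 then Some 0 else if l = 1 then Some 1 else if l = 2 \<or> l = 3 then Some 2 else None)"

definition tadd :: "(nat \<Rightarrow> 'k::field_char_0 ser) \<Rightarrow> (nat \<Rightarrow> 'k ser) \<Rightarrow> nat \<Rightarrow> 'k ser" where
  "tadd a b = (\<lambda>i w. a i w + b i w)"
definition tscale :: "'k::field_char_0 \<Rightarrow> (nat \<Rightarrow> 'k ser) \<Rightarrow> nat \<Rightarrow> 'k ser" where
  "tscale c a = (\<lambda>i w. c * a i w)"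

definition t12 :: "nat \<Rightarrow> 'k::field_char_0 ser" where
  "t12 = (\<lambda>i. if i = 0 then X 1 else if i = 1 then X 0 else zser)"
definition t13 :: "nat \<Rightarrow> 'k::field_char_0 ser" where
  "t13 = (\<lambda>i. if i = 0 then X 2 else if i = 2 then X 0 else zser)"
definition t23 :: "nat \<Rightarrow> 'k::field_char_0 ser" where
  "t23 = (\<lambda>i. if i = 1 then X 2 else if i = 2 then X 1 else zser)"

text \<open>pi(phi_2) = alpha + beta + gamma, where phi_2 = (alpha[y,z], beta[z,x], gamma[x,y]):
  alpha is the coefficient of yz in the first component, etc.\<close>
definition pi2 :: "(nat \<Rightarrow> 'k::field_char_0 ser) \<Rightarrow> 'k" where
  "pi2 a = a 0 [1,2] + a 1 [2,0] + a 2 [0,1]"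

end

theory Submission imports Defs begin

lemma der_Nil: "der a g [] = 0"
  by (simp add: der_def)

lemma der_1: "der a g [x] = 0"
  by (simp add: der_def atMost_Suc)

lemma der_2: "der a g [x,y] = g [x] * a x [y] - g [y] * a y [x]"
  by (simp add: der_def atMost_Suc numeral_2_eq_2 Let_def)

lemma der_3: "der a g [x,y,z] = g [x,z] * a x [y] - g [y,z] * a y [x] + g [x] * a x [y,z] - g [z] * a z [x,y]
   + g [x,y] * a y [z] - g [x,z] * a z [y]"
  by (simp add: der_def atMost_Suc numeral_3_eq_3 Let_def algebra_simps)

lemma texp_Nil: "texp a g [] = g []"
  by (simp add: texp_def)

lemma texp_1: "texp a g [x] = g [x]"
  by (simp add: texp_def der_1)

lemma texp_2: "texp a g [x,y] = g [x,y] + (g [x] * a x [y] - g [y] * a y [x])"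
  by (simp add: texp_def atMost_Suc numeral_2_eq_2 der_1 der_2)

lemma texp_3: "texp a g [x,y,z] = g [x,y,z] + der a g [x,y,z] + der a (der a g) [x,y,z] / 2"
  by (simp add: texp_def atMost_Suc numeral_3_eq_3 der_1 der_2 der_3 numeral_2_eq_2)

lemma lie_poly_low: "f \<in> lie_poly n \<Longrightarrow> f [] = 0 \<and> (\<forall>y z. f [y,z] + f [z,y] = 0)"
proof (induction rule: lie_poly.induct)
  case lp_zero then show ?case by (simp add: zser_def)
next
  case (lp_gen i) then show ?case by (simp add: X_def)
next
  case (lp_add f g)
  then have "\<forall>y z. (f [y,z] + f [z,y]) + (g [y,z] + g [z,y]) = 0" by simp
  then show ?case using lp_add.IH by (simp add: algebra_simps)
next
  case (lp_scale f c) then show ?case by (simp add: distrib_left[symmetric])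
next
  case (lp_br f g)
  then have f0: "f [] = 0" and g0: "g [] = 0" by auto
  have s0: "smult f g [] = f [] * g []" for f g :: "'a ser" by (simp add: smult_def)
  have s2: "smult f g [y,z] = f [] * g [y,z] + f [y] * g [z] + f [y,z] * g []" for f g :: "'a ser" and y z
    by (simp add: smult_def atMost_Suc numeral_2_eq_2)
  show ?case by (simp add: sbr_def s0 s2 f0 g0)
qed

lemma lie_ser_low:
  assumes "lie_ser n f" shows "f [] = 0" "f [y,z] = - f [z,y]"
proof -
  have h0: "hom 0 f \<in> lie_poly n" and h2: "hom 2 f \<in> lie_poly n" using assms by (auto simp: lie_ser_def)
  from lie_poly_low[OF h0] show "f [] = 0" by (simp add: hom_def)
  from lie_poly_low[OF h2] have "hom 2 f [y,z] + hom 2 f [z,y] = 0" by blast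
  then show "f [y,z] = - f [z,y]" by (simp add: hom_def eq_neg_iff_add_eq_0)
qed

lemma sum_atMost_split0: "(\<Sum>k\<le>n. f k) = f 0 + (\<Sum>k<n. f (Suc k))"
  by (induction n) (simp_all add: add.assoc)

lemma der_local:
  fixes a :: "nat \<Rightarrow> 'k::field_char_0 ser"
  assumes a0: "\<And>i. a i [] = 0" and eq: "\<And>w. length w < length v \<Longrightarrow> g w = g' w"
  shows "der a g v = der a g' v"
  unfolding der_def
proof (intro sum.cong refl)
  fix i j assume i: "i \<in> {..length v}" and j: "j \<in> {..length v}"
  show "(if i < j then let p = take i v; m = drop i (take j v); s = drop j v in
          g (p @ [hd m] @ s) * a (hd m) (tl m) - g (p @ [last m] @ s) * a (last m) (butlast m) else 0) =
        (if i < j then let p = take i v; m = drop i (take j v); s = drop j v in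
          g' (p @ [hd m] @ s) * a (hd m) (tl m) - g' (p @ [last m] @ s) * a (last m) (butlast m) else 0)"
  proof (cases "i < j")
    case False then show ?thesis by simp
  next
    case True
    define m where "m = drop i (take j v)"
    have lm: "length m = j - i" using i j True by (simp add: m_def)
    show ?thesis
    proof (cases "j = Suc i")
      case True
      then have "length m = 1" using lm by simp
      then obtain c where "m = [c]" by (metis One_nat_def length_0_conv length_Suc_conv)
      then show ?thesis using a0 by (simp add: m_def[symmetric] Let_def)
    next
      case False
      then have lt: "length (take i v @ [x] @ drop j v) < length v" for x
        using \<open>i < j\<close> i j by auto
      show ?thesis using eq[OF lt] by (simp add: m_def[symmetric] Let_def)
    qed
  qed
qed

lemma derpow_local:
  fixes a :: "nat \<Rightarrow> 'k::field_char_0 ser"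
  assumes a0: "\<And>i. a i [] = 0" and eq: "\<And>w. length w < n \<Longrightarrow> g w = g' w"
  shows "length w < n \<Longrightarrow> (der a ^^ k) g w = (der a ^^ k) g' w"
proof (induction k arbitrary: w)
  case 0 then show ?case using eq by simp
next
  case (Suc k)
  have "der a ((der a ^^ k) g) w = der a ((der a ^^ k) g') w"
    by (rule der_local) (use a0 Suc in auto)
  then show ?case by simp
qed

lemma derpow_local_strict:
  fixes a :: "nat \<Rightarrow> 'k::field_char_0 ser"
  assumes a0: "\<And>i. a i [] = 0" and eq: "\<And>w. length w < length v \<Longrightarrow> g w = g' w"
  shows "(der a ^^ Suc k) g v = (der a ^^ Suc k) g' v"
proof -
  have "der a ((der a ^^ k) g) v = der a ((der a ^^ k) g') v"
    by (rule der_local, rule a0, rule derpow_local, rule a0, rule eq)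
  then show ?thesis by simp
qed

primrec gg :: "(nat \<Rightarrow> 'k::field_char_0 ser) \<Rightarrow> 'k ser \<Rightarrow> nat \<Rightarrow> 'k ser" where
  "gg a h 0 = (\<lambda>w. 0)"
| "gg a h (Suc n) = (\<lambda>w. if length w < n then gg a h n w
      else h w - (\<Sum>k<length w. (der a ^^ Suc k) (gg a h n) w / fact (Suc k)))"

definition pre :: "(nat \<Rightarrow> 'k::field_char_0 ser) \<Rightarrow> 'k ser \<Rightarrow> 'k ser" where
  "pre a h = (\<lambda>w. gg a h (Suc (length w)) w)"

lemma gg_pre: "length w < n \<Longrightarrow> gg a h n w = pre a h w"
proof (induction n arbitrary: w)
  case 0 then show ?case by simp
next
  case (Suc n)
  show ?case
  proof (cases "length w < n")
    case True then show ?thesis using Suc.IH by simp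
  next
    case False then have "length w = n" using Suc.prems by simp
    then show ?thesis by (simp add: pre_def)
  qed
qed

lemma texp_surj:
  fixes a :: "nat \<Rightarrow> 'k::field_char_0 ser"
  assumes a0: "\<And>i. a i [] = 0"
  shows "surj (texp a)"
proof -
  have "texp a (pre a h) = h" for h
  proof
    fix w
    have loc: "(der a ^^ Suc k) (pre a h) w = (der a ^^ Suc k) (gg a h (length w)) w" for k
      by (rule derpow_local_strict, rule a0) (simp add: gg_pre)
    have "texp a (pre a h) w = pre a h w + (\<Sum>k<length w. (der a ^^ Suc k) (pre a h) w / fact (Suc k))"
      unfolding texp_def by (subst sum_atMost_split0) simp
    also have "\<dots> = pre a h w + (\<Sum>k<length w. (der a ^^ Suc k) (gg a h (length w)) w / fact (Suc k))"
      using loc by simp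
    also have "\<dots> = h w" by (simp add: pre_def)
    finally show "texp a (pre a h) w = h w" .
  qed
  then show ?thesis by (metis surjI)
qed

lemma texp_inv: "(\<And>i. a i [] = 0) \<Longrightarrow> texp a (inv (texp a) h) = h"
  by (rule surj_f_inv_f[OF texp_surj])

lemma cabl_Nil: "(\<And>k. a k [] = 0) \<Longrightarrow> cabl c a j [] = 0"
  by (simp add: cabl_def relabel_def zser_def split: option.split)

theorem proposition9p2:
  fixes \<phi> :: "nat \<Rightarrow> 'k::field_char_0 ser"
  assumes kv3: "kv 3 \<phi>"
    and pentagon: "texp (cabl c_12_3_4 \<phi>) \<circ> texp (cabl c_1_2_34 \<phi>)
                 = texp (cabl c_1_2_3 \<phi>) \<circ> texp (cabl c_1_23_4 \<phi>) \<circ> texp (cabl c_2_3_4 \<phi>)"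
    and inversion: "texp (perm3 0 1 2 \<phi>) \<circ> texp (perm3 2 1 0 \<phi>) = id"
    and hex1: "texp (tscale (1/2) (tadd t13 t23))
             = texp (perm3 1 0 2 \<phi>) \<circ> texp (tscale (1/2) t13) \<circ> inv (texp (perm3 1 2 0 \<phi>))
               \<circ> texp (tscale (1/2) t23) \<circ> texp (perm3 2 1 0 \<phi>)"
    and hex2: "texp (tscale (1/2) (tadd t12 t13))
             = inv (texp (perm3 0 2 1 \<phi>)) \<circ> texp (tscale (1/2) t13) \<circ> texp (perm3 2 0 1 \<phi>)
               \<circ> texp (tscale (1/2) t12) \<circ> inv (texp (perm3 2 1 0 \<phi>))"
  shows "pi2 \<phi> = 1/8"
proof -
  have td: "tder 3 \<phi>" and sd: "der \<phi> (\<lambda>w. \<Sum>i<3. X i w) = zser"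
    using kv3 by (auto simp: kv_def sder_def)
  have ls: "lie_ser 3 (\<phi> i)" and dg: "\<phi> i [i] = 0" if "i < 3" for i
    using td that by (auto simp: tder_def)
  have big: "\<phi> i = zser" if "i \<ge> 3" for i using td that by (auto simp: tder_def)
  have c0: "\<phi> i [] = 0" for i
    by (cases "i < 3") (simp_all add: lie_ser_low(1)[OF ls] big zser_def)
  have anti: "\<phi> i [y,z] = - \<phi> i [z,y]" if "i < 3" for i y z
    using lie_ser_low(2)[OF ls[OF that]] .
  have S1: "(\<Sum>i<3. X i [x]) = (1::'k)" if "x < 3" for x
    using that by (auto simp: X_def numeral_3_eq_3 lessThan_Suc less_Suc_eq)
  have S2: "(\<Sum>i<3. X i [x,y]) = (0::'k)" for x y
    by (simp add: X_def)
  have sd2: "\<phi> x [y] = \<phi> y [x]" if "x < 3" "y < 3" for x y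
  proof -
    have "der \<phi> (\<lambda>w. \<Sum>i<3. X i w) [x,y] = 0" using sd by (simp add: zser_def)
    then show ?thesis using that by (simp add: der_2 S1)
  qed
  have sd3: "\<phi> x [y,z] = \<phi> z [x,y]" if "x < 3" "z < 3" for x y z
  proof -
    have "der \<phi> (\<lambda>w. \<Sum>i<3. X i w) [x,y,z] = 0" using sd by (simp add: zser_def)
    then show ?thesis using that by (simp add: der_3 S1 S2)
  qed
  have inv1: "\<phi> x [y] + \<phi> z [w] = 0"
    if "(x,y,z,w) \<in> {(0,1,2,1),(0,2,2,0),(1,0,1,2)}" for x y z w
  proof -
    have "(texp (perm3 0 1 2 \<phi>) \<circ> texp (perm3 2 1 0 \<phi>)) (X x) [x,y] = id (X x) [x,y]"
      using inversion by simp
    then show ?thesis using that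
      by (auto simp: texp_2 texp_1 X_def perm3_def cabl_def relabel_def algebra_simps)
  qed
  have pent: "\<phi> 0 [1] = 0"
  proof -
    have "(texp (cabl c_12_3_4 \<phi>) \<circ> texp (cabl c_1_2_34 \<phi>)) (X 0) [0,1]
        = (texp (cabl c_1_2_3 \<phi>) \<circ> texp (cabl c_1_23_4 \<phi>) \<circ> texp (cabl c_2_3_4 \<phi>)) (X 0) [0,1]"
      using pentagon by simp
    then show ?thesis
      by (simp add: texp_2 texp_1 X_def cabl_def relabel_def c_12_3_4_def c_1_2_34_def c_1_2_3_def
          c_1_23_4_def c_2_3_4_def zser_def dg)
  qed
  have z: "\<phi> 0 [0] = 0" "\<phi> 0 [1] = 0" "\<phi> 0 [2] = 0" "\<phi> 1 [0] = 0" "\<phi> 1 [1] = 0"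
       "\<phi> 1 [2] = 0" "\<phi> 2 [0] = 0" "\<phi> 2 [1] = 0" "\<phi> 2 [2] = 0"
  proof -
    have a1: "\<phi> 1 [0] = \<phi> 0 [1]" "\<phi> 2 [0] = \<phi> 0 [2]" "\<phi> 2 [1] = \<phi> 1 [2]"
      using sd2[of 1 0] sd2[of 2 0] sd2[of 2 1] by simp_all
    have i1: "\<phi> 0 [1] + \<phi> 2 [1] = 0" "\<phi> 0 [2] + \<phi> 2 [0] = 0" "\<phi> 1 [0] + \<phi> 1 [2] = 0"
      using inv1 by auto
    have d: "\<phi> 0 [0] = 0" "\<phi> 1 [1] = 0" "\<phi> 2 [2] = 0" using dg by auto
    show "\<phi> 0 [0] = 0" "\<phi> 0 [1] = 0" "\<phi> 0 [2] = 0" "\<phi> 1 [0] = 0" "\<phi> 1 [1] = 0"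
       "\<phi> 1 [2] = 0" "\<phi> 2 [0] = 0" "\<phi> 2 [1] = 0" "\<phi> 2 [2] = 0"
      using a1 i1 d pent by auto
  qed
  have pc0: "perm3 i1 i2 i3 \<phi> j [] = 0" for i1 i2 i3 j
    unfolding perm3_def by (rule cabl_Nil) (rule c0)
  define h1 where "h1 = inv (texp (perm3 2 1 0 \<phi>)) (X 2)"
  have e1: "texp (perm3 2 1 0 \<phi>) h1 = X 2"
    unfolding h1_def by (rule texp_inv) (rule pc0)
  have h1a: "h1 [x] = X 2 [x]" for x
    using fun_cong[OF e1, of "[x]"] by (simp add: texp_1)
  have h1b: "h1 [0,1] = 0" "h1 [0,2] = 0" "h1 [1,2] = 0"
    using fun_cong[OF e1, of "[0,1]"] fun_cong[OF e1, of "[0,2]"] fun_cong[OF e1, of "[1,2]"]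
    by (simp_all add: texp_2 h1a X_def perm3_def cabl_def relabel_def z z[unfolded One_nat_def])
  have h1c: "h1 [0,1,2] = \<phi> 0 [2,1]"
    using fun_cong[OF e1, of "[0,1,2]"]
    by (simp add: texp_3 der_3 der_2 der_1 h1a h1b h1b[unfolded One_nat_def] X_def perm3_def cabl_def relabel_def z z[unfolded One_nat_def])
  define h2 where "h2 = texp (tscale (1/2) t12) h1"
  have h2a: "h2 [x] = X 2 [x]" for x by (simp add: h2_def texp_1 h1a)
  have h2c: "h2 [0,1,2] = \<phi> 0 [2,1]"
    by (simp add: h2_def texp_3 der_3 der_2 der_1 h1a h1b h1b[unfolded One_nat_def] h1c h1c[unfolded One_nat_def] X_def tscale_def t12_def zser_def)
  define h3 where "h3 = texp (perm3 2 0 1 \<phi>) h2"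
  have h3a: "h3 [x] = X 2 [x]" for x by (simp add: h3_def texp_1 h2a)
  have h3c: "h3 [0,1,2] = \<phi> 0 [2,1] - \<phi> 0 [1,2]"
    by (simp add: h3_def texp_3 der_3 der_2 der_1 h2a h2c h2c[unfolded One_nat_def] X_def perm3_def cabl_def relabel_def z z[unfolded One_nat_def])
  define h4 where "h4 = texp (tscale (1/2) t13) h3"
  have h4a: "h4 [x] = X 2 [x]" for x by (simp add: h4_def texp_1 h3a)
  have h4c: "h4 [0,1,2] = \<phi> 0 [2,1] - \<phi> 0 [1,2]"
    by (simp add: h4_def texp_3 der_3 der_2 der_1 h3a h3c h3c[unfolded One_nat_def] X_def tscale_def t13_def zser_def)
  define h5 where "h5 = inv (texp (perm3 0 2 1 \<phi>)) h4"
  have e5: "texp (perm3 0 2 1 \<phi>) h5 = h4"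
    unfolding h5_def by (rule texp_inv) (rule pc0)
  have h5a: "h5 [x] = X 2 [x]" for x
    using fun_cong[OF e5, of "[x]"] by (simp add: texp_1 h4a)
  have h5c: "h5 [0,1,2] = \<phi> 0 [2,1] - \<phi> 0 [1,2] + \<phi> 1 [0,2]"
    using fun_cong[OF e5, of "[0,1,2]"]
    by (simp add: texp_3 der_3 der_2 der_1 h5a h4c h4c[unfolded One_nat_def] X_def perm3_def cabl_def relabel_def z z[unfolded One_nat_def])
      (simp add: diff_eq_eq)
  have lhs: "texp (tscale (1/2) (tadd t12 t13)) (X 2 :: 'k ser) [0,1,2] = - 1/8"
    by (simp add: texp_3 der_3 der_2 der_1 X_def tscale_def tadd_def t12_def t13_def zser_def)
  have eq: "texp (tscale (1/2) (tadd t12 t13)) (X 2 :: 'k ser) [0,1,2] = h5 [0,1,2]"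
    using fun_cong[OF hex2, of "X 2"] by (simp add: h1_def h2_def h3_def h4_def h5_def)
  have key: "- 1/8 = \<phi> 0 [2,1] - \<phi> 0 [1,2] + \<phi> 1 [0,2]"
    using trans[OF trans[OF lhs[symmetric] eq] h5c] .
  have q: "\<phi> 2 [0,1] = \<phi> 0 [1,2]" "\<phi> 1 [2,0] = \<phi> 0 [1,2]"
    using sd3[of 0 2 1] sd3[of 1 0 2] by simp_all
  have r: "\<phi> 0 [2,1] = - \<phi> 0 [1,2]" "\<phi> 1 [0,2] = - \<phi> 1 [2,0]"
    using anti[of 0 2 1] anti[of 1 0 2] by simp_all
  have k2: "- 1/8 = - \<phi> 0 [1,2] - \<phi> 0 [1,2] + - \<phi> 0 [1,2]"
    using key unfolding r q(2) .
  have k3: "\<phi> 0 [1,2] + \<phi> 0 [1,2] + \<phi> 0 [1,2] = 1/8"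
    using k2 by (simp add: algebra_simps)
  have "pi2 \<phi> = \<phi> 0 [1,2] + \<phi> 0 [1,2] + \<phi> 0 [1,2]"
    unfolding pi2_def q(2) q(1)[symmetric] ..
  then show ?thesis using k3 by simp
qed

end
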